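(* Let $T$ be a finite rooted tree in which every inner node has at least two children, with node set $V$ and leaf set $L$. There exists a family of four bi-colourings $(A_1,B_1),\dots,(A_4,B_4)$ of $L$ identifying $T$.
   Context: A bi-colouring is a pair $(A,B)$ of disjoint subsets of $L$ of equal cardinality. A pair $(\pi,\sigma)$ of injective maps from $S\subseteq V\setminus L$ to $L$ identifies $S$ if for each $s\in S$, $s$ is the least common ancestor of $\pi(s)$ and $\sigma(s)$ (every node is its own ancestor); for $s\in S$ a node $x$ is $s$-requested if it lies on the path from $\pi(s)$ to $\sigma(s)$; the pair has unique request if every node is $s$-requested for at most one $s\in S$. A bi-colouring $(A,B)$ identifies $S$ if some pair $(\pi,\sigma)$ identifying $S$ with unique request has $\pi(S)=A$, $\sigma(S)=B$. A family $(A_1,B_1),\dots,(A_n,B_n)$ of bi-colourings identifies $S$ if there is a partition $(S_1,\dots,S_n)$ of $S$ (parts possibly empty) with $(A_i,B_i)$ identifying $S_i$ for each $i$; it identifies $T$ if it identifies $V\setminus L$. The sets $A_i$, $A_j$, $B_j$ for $i\neq j$ need not be disjoint. *)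

theory Defs
  imports Main
begin

text \<open>A finite rooted tree is represented by its finite node set V, its root r and a
parent function par (with par r = r), such that every node reaches the root by
iterating par.\<close>

definition rooted_tree :: "'a set \<Rightarrow> 'a \<Rightarrow> ('a \<Rightarrow> 'a) \<Rightarrow> bool" where
  "rooted_tree V r par \<longleftrightarrow> finite V \<and> r \<in> V \<and> par r = r \<and>
     (\<forall>v\<in>V. par v \<in> V) \<and> (\<forall>v\<in>V. \<exists>k. (par ^^ k) v = r)"

definition children :: "'a set \<Rightarrow> 'a \<Rightarrow> ('a \<Rightarrow> 'a) \<Rightarrow> 'a \<Rightarrow> 'a set" where
  "children V r par u = {v \<in> V. v \<noteq> r \<and> par v = u}"

definition leaves :: "'a set \<Rightarrow> 'a \<Rightarrow> ('a \<Rightarrow> 'a) \<Rightarrow> 'a set" where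
  "leaves V r par = {v \<in> V. children V r par v = {}}"

definition anc :: "('a \<Rightarrow> 'a) \<Rightarrow> 'a \<Rightarrow> 'a \<Rightarrow> bool" where
  "anc par u v \<longleftrightarrow> (\<exists>k. (par ^^ k) v = u)"

definition is_lca :: "('a \<Rightarrow> 'a) \<Rightarrow> 'a \<Rightarrow> 'a \<Rightarrow> 'a \<Rightarrow> bool" where
  "is_lca par s x y \<longleftrightarrow> anc par s x \<and> anc par s y \<and>
     (\<forall>w. anc par w x \<and> anc par w y \<longrightarrow> anc par w s)"

text \<open>Nodes on the tree path between x and y: ancestors of x or y lying below
every common ancestor of x and y.\<close>
definition tpath :: "'a set \<Rightarrow> ('a \<Rightarrow> 'a) \<Rightarrow> 'a \<Rightarrow> 'a \<Rightarrow> 'a set" where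
  "tpath V par x y = {z \<in> V. (anc par z x \<or> anc par z y) \<and>
     (\<forall>w. anc par w x \<and> anc par w y \<longrightarrow> anc par w z)}"

definition bicolouring :: "'a set \<Rightarrow> 'a \<Rightarrow> ('a \<Rightarrow> 'a) \<Rightarrow> 'a set \<Rightarrow> 'a set \<Rightarrow> bool" where
  "bicolouring V r par A B \<longleftrightarrow> A \<subseteq> leaves V r par \<and> B \<subseteq> leaves V r par \<and>
     A \<inter> B = {} \<and> card A = card B"

definition pair_identifies ::
  "'a set \<Rightarrow> 'a \<Rightarrow> ('a \<Rightarrow> 'a) \<Rightarrow> ('a \<Rightarrow> 'a) \<Rightarrow> ('a \<Rightarrow> 'a) \<Rightarrow> 'a set \<Rightarrow> bool" where
  "pair_identifies V r par \<pi> \<sigma> S \<longleftrightarrow>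
     S \<subseteq> V - leaves V r par \<and> inj_on \<pi> S \<and> inj_on \<sigma> S \<and>
     \<pi> ` S \<subseteq> leaves V r par \<and> \<sigma> ` S \<subseteq> leaves V r par \<and>
     (\<forall>s\<in>S. is_lca par s (\<pi> s) (\<sigma> s))"

definition unique_request ::
  "'a set \<Rightarrow> ('a \<Rightarrow> 'a) \<Rightarrow> ('a \<Rightarrow> 'a) \<Rightarrow> ('a \<Rightarrow> 'a) \<Rightarrow> 'a set \<Rightarrow> bool" where
  "unique_request V par \<pi> \<sigma> S \<longleftrightarrow>
     (\<forall>x\<in>V. \<forall>s\<in>S. \<forall>t\<in>S. x \<in> tpath V par (\<pi> s) (\<sigma> s) \<and>
        x \<in> tpath V par (\<pi> t) (\<sigma> t) \<longrightarrow> s = t)"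

definition bicol_identifies ::
  "'a set \<Rightarrow> 'a \<Rightarrow> ('a \<Rightarrow> 'a) \<Rightarrow> 'a set \<Rightarrow> 'a set \<Rightarrow> 'a set \<Rightarrow> bool" where
  "bicol_identifies V r par A B S \<longleftrightarrow>
     (\<exists>\<pi> \<sigma>. pair_identifies V r par \<pi> \<sigma> S \<and> unique_request V par \<pi> \<sigma> S \<and>
        \<pi> ` S = A \<and> \<sigma> ` S = B)"

definition family_identifies ::
  "'a set \<Rightarrow> 'a \<Rightarrow> ('a \<Rightarrow> 'a) \<Rightarrow> nat \<Rightarrow> (nat \<Rightarrow> 'a set) \<Rightarrow> (nat \<Rightarrow> 'a set) \<Rightarrow> 'a set \<Rightarrow> bool" where
  "family_identifies V r par n A B S \<longleftrightarrow>
     (\<exists>P. (\<Union>i<n. P i) = S \<and> (\<forall>i<n. \<forall>j<n. i \<noteq> j \<longrightarrow> P i \<inter> P j = {}) \<and>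
        (\<forall>i<n. bicol_identifies V r par (A i) (B i) (P i)))"

definition family_identifies_tree ::
  "'a set \<Rightarrow> 'a \<Rightarrow> ('a \<Rightarrow> 'a) \<Rightarrow> nat \<Rightarrow> (nat \<Rightarrow> 'a set) \<Rightarrow> (nat \<Rightarrow> 'a set) \<Rightarrow> bool" where
  "family_identifies_tree V r par n A B \<longleftrightarrow>
     family_identifies V r par n A B (V - leaves V r par)"

end

theory Submission
  imports Defs
begin

lemma anc_refl: "anc par x x" unfolding anc_def by (rule exI[of _ 0]) simp

lemma anc_trans: assumes "anc par a b" "anc par b c" shows "anc par a c"
proof -
  obtain k where k: "(par ^^ k) b = a" using assms(1) unfolding anc_def by blast
  obtain m where m: "(par ^^ m) c = b" using assms(2) unfolding anc_def by blast
  have "(par ^^ (k + m)) c = a" using k m by (simp add: funpow_add)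
  then show ?thesis unfolding anc_def by blast
qed

lemma anc_par: "anc par (par x) x" unfolding anc_def by (rule exI[of _ 1]) simp

lemma anc_step: "anc par z l \<longleftrightarrow> z = l \<or> anc par z (par l)"
proof
  assume "anc par z l"
  then obtain k where k: "(par ^^ k) l = z" unfolding anc_def by blast
  show "z = l \<or> anc par z (par l)"
  proof (cases k)
    case 0 then show ?thesis using k by simp
  next
    case (Suc m)
    have e: "(par ^^ Suc m) l = (par ^^ m) (par l)" by (simp only: funpow_Suc_right comp_apply)
    have "(par ^^ m) (par l) = z" using trans[OF e[symmetric] k[unfolded Suc]] .
    then show ?thesis unfolding anc_def by blast
  qed
next
  assume "z = l \<or> anc par z (par l)"
  then show "anc par z l"
  proof
    assume "z = l" then show ?thesis using anc_refl by simp
  next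
    assume "anc par z (par l)" then show ?thesis by (rule anc_trans[OF _ anc_par])
  qed
qed

lemma funpow_closed: "rooted_tree V r par \<Longrightarrow> y \<in> V \<Longrightarrow> (par ^^ k) y \<in> V"
  by (induction k) (auto simp: rooted_tree_def)


lemma funpow_r: "par r = r \<Longrightarrow> (par ^^ k) r = r"
  by (induction k) auto

lemma funpow_mult: "(par ^^ p) b = b \<Longrightarrow> (par ^^ (n * p)) b = b"
proof (induction n)
  case 0 then show ?case by simp
next
  case (Suc n)
  have "(par ^^ (Suc n * p)) b = (par ^^ p) ((par ^^ (n * p)) b)"
    by (simp add: funpow_add)
  then show ?case using Suc by simp
qed

lemma anc_antisym:
  assumes T: "rooted_tree V r par" and b: "b \<in> V" and ab: "anc par a b" and ba: "anc par b a"
  shows "a = b"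
proof -
  obtain k where k: "(par ^^ k) b = a" using ab unfolding anc_def by blast
  obtain m where m: "(par ^^ m) a = b" using ba unfolding anc_def by blast
  have cyc: "(par ^^ (m + k)) b = b" using k m by (simp add: funpow_add)
  show ?thesis
  proof (cases "m + k = 0")
    case True then show ?thesis using k by simp
  next
    case False
    obtain N where N: "(par ^^ N) b = r" using T b unfolding rooted_tree_def by blast
    have pr: "par r = r" using T unfolding rooted_tree_def by blast
    have c1: "(par ^^ (N * (m + k))) b = b" using funpow_mult[OF cyc] .
    define D where "D = N * (m + k) - N"
    have DN: "N * (m + k) = D + N" unfolding D_def proof -
      have "1 \<le> m + k" using False by arith
      then have "N * 1 \<le> N * (m + k)" by (rule mult_le_mono2)
      then show "N * (m + k) = N * (m + k) - N + N" by simp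
    qed
    have c2: "(par ^^ (D + N)) b = (par ^^ D) ((par ^^ N) b)" by (simp only: funpow_add comp_apply)
    have c3: "(par ^^ D) ((par ^^ N) b) = r" unfolding N using funpow_r[of par r, OF pr] .
    have "b = r" using trans[OF trans[OF c1[unfolded DN, symmetric] c2] c3] .
    then show ?thesis using k funpow_r[of par r, OF pr] by simp
  qed
qed

lemma anc_leaf:
  assumes T: "rooted_tree V r par" and z: "z \<in> leaves V r par" and x: "x \<in> V" and a: "anc par z x"
  shows "x = z"
proof -
  obtain k where k: "(par ^^ k) x = z" using a unfolding anc_def by blast
  have "\<forall>x. x \<in> V \<longrightarrow> (par ^^ k) x = z \<longrightarrow> x = z"
  proof (induction k)
    case 0 show ?case by simp
  next
    case (Suc m)
    show ?case
    proof (intro allI impI)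
      fix x assume xV: "x \<in> V" and xk: "(par ^^ Suc m) x = z"
      have pV: "par x \<in> V" using xV T unfolding rooted_tree_def by blast
      have e: "(par ^^ Suc m) x = (par ^^ m) (par x)" by (simp only: funpow_Suc_right comp_apply)
      have "(par ^^ m) (par x) = z" using trans[OF e[symmetric] xk] .
      then have px: "par x = z" using Suc.IH pV by blast
      show "x = z"
      proof (cases "x = r")
        case True then show ?thesis using px T unfolding rooted_tree_def by auto
      next
        case False
        then have "x \<in> children V r par z" using px xV unfolding children_def by blast
        then show ?thesis using z unfolding leaves_def by blast
      qed
    qed
  qed
  then show ?thesis using x k by blast
qed

lemma tpath_lca:
  assumes "is_lca par s x y"
  shows "tpath V par x y = {z \<in> V. (anc par z x \<or> anc par z y) \<and> anc par s z}"
proof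
  show "tpath V par x y \<subseteq> {z \<in> V. (anc par z x \<or> anc par z y) \<and> anc par s z}"
    using assms unfolding tpath_def is_lca_def by blast
next
  show "{z \<in> V. (anc par z x \<or> anc par z y) \<and> anc par s z} \<subseteq> tpath V par x y"
  proof
    fix z assume z: "z \<in> {z \<in> V. (anc par z x \<or> anc par z y) \<and> anc par s z}"
    have "\<forall>w. anc par w x \<and> anc par w y \<longrightarrow> anc par w z"
    proof (intro allI impI)
      fix w assume "anc par w x \<and> anc par w y"
      then have "anc par w s" using assms unfolding is_lca_def by blast
      then show "anc par w z" using z anc_trans[of par w s z] by blast
    qed
    then show "z \<in> tpath V par x y" using z unfolding tpath_def by blast
  qed
qed

lemma tpath_sym: "tpath V par x y = tpath V par y x"
  unfolding tpath_def by blast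

lemma lca_sym: "is_lca par s x y \<Longrightarrow> is_lca par s y x"
  unfolding is_lca_def by blast

lemma endpoint: "x \<in> V \<Longrightarrow> is_lca par s x y \<Longrightarrow> x \<in> tpath V par x y"
  using tpath_lca[of par s x y V] anc_refl[of par x] unfolding is_lca_def by blast


lemma keep:
  assumes T: "rooted_tree V r par" and x: "x \<in> V'" and y: "y \<in> V'" and sub: "V' \<subseteq> V"
    and CinL: "\<forall>z\<in>V - V'. z \<in> leaves V r par"
  shows "tpath V par x y = tpath V' par x y"
proof
  show "tpath V par x y \<subseteq> tpath V' par x y"
  proof
    fix z assume z: "z \<in> tpath V par x y"
    have "z \<in> V'"
    proof (rule ccontr)
      assume "z \<notin> V'"
      then have zl: "z \<in> leaves V r par" using z CinL unfolding tpath_def by blast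
      have "anc par z x \<or> anc par z y" using z unfolding tpath_def by blast
      then have "x = z \<or> y = z" using anc_leaf[OF T zl] x y sub by blast
      then show False using x y \<open>z \<notin> V'\<close> by blast
    qed
    then show "z \<in> tpath V' par x y" using z unfolding tpath_def by blast
  qed
next
  show "tpath V' par x y \<subseteq> tpath V par x y" using sub unfolding tpath_def by blast
qed

lemma redirect:
  assumes T: "rooted_tree V r par" and l: "l \<in> leaves V r par" and pl: "par l = v"
    and lca: "is_lca par s v y" and yV': "y \<in> V'" and sub: "V' \<subseteq> V" and lV': "l \<notin> V'"
    and CinL: "\<forall>z\<in>V - V'. z \<in> leaves V r par"
  shows "is_lca par s l y \<and> (\<forall>z\<in>tpath V par l y. (z \<in> V' \<longrightarrow> z \<in> tpath V' par v y) \<and> (z \<notin> V' \<longrightarrow> z = l))"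
proof -
  have yV: "y \<in> V" using yV' sub by blast
  have lV: "l \<in> V" using l unfolding leaves_def by blast
  have al: "anc par v l" using anc_par[of par l] pl by simp
  have lca': "is_lca par s l y"
    unfolding is_lca_def
  proof (intro conjI allI impI)
    have "anc par s v" using lca unfolding is_lca_def by blast
    then show "anc par s l" by (rule anc_trans[OF _ al])
    show "anc par s y" using lca unfolding is_lca_def by blast
    fix w assume w: "anc par w l \<and> anc par w y"
    then have "w = l \<or> anc par w v" using anc_step[of par w l] pl by simp
    moreover have "w \<noteq> l"
    proof
      assume "w = l"
      then have "y = l" using anc_leaf[OF T l yV] w by blast
      then show False using yV' lV' by blast
    qed
    ultimately have "anc par w v" by blast
    then show "anc par w s" using w lca unfolding is_lca_def by blast
  qed
  have "\<forall>z\<in>tpath V par l y. (z \<in> V' \<longrightarrow> z \<in> tpath V' par v y) \<and> (z \<notin> V' \<longrightarrow> z = l)"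
  proof
    fix z assume z: "z \<in> tpath V par l y"
    then have zz: "z \<in> V" "anc par z l \<or> anc par z y" "anc par s z"
      using tpath_lca[OF lca', of V] by auto
    show "(z \<in> V' \<longrightarrow> z \<in> tpath V' par v y) \<and> (z \<notin> V' \<longrightarrow> z = l)"
    proof (intro conjI impI)
      assume zV': "z \<in> V'"
      have "anc par z v \<or> anc par z y" using zz(2) anc_step[of par z l] pl zV' lV' by auto
      then show "z \<in> tpath V' par v y" using tpath_lca[OF lca, of V'] zV' zz(3) by blast
    next
      assume zV': "z \<notin> V'"
      then have zl: "z \<in> leaves V r par" using CinL zz(1) by blast
      show "z = l"
      proof (cases "anc par z l")
        case True then show ?thesis using anc_leaf[OF T zl lV] by simp
      next
        case False
        then have "anc par z y" using zz(2) by blast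
        then have "y = z" using anc_leaf[OF T zl yV] by blast
        then show ?thesis using yV' zV' by blast
      qed
    qed
  qed
  then show ?thesis using lca' by blast
qed


definition inv4 :: "'a set \<Rightarrow> 'a \<Rightarrow> ('a \<Rightarrow> 'a) \<Rightarrow> bool" where
  "inv4 V r par \<longleftrightarrow> (\<exists>(cl::'a \<Rightarrow> nat) \<pi> \<sigma>.
     (\<forall>s\<in>V - leaves V r par. cl s < 4 \<and> \<pi> s \<in> leaves V r par \<and> \<sigma> s \<in> leaves V r par
        \<and> is_lca par s (\<pi> s) (\<sigma> s)) \<and>
     (\<forall>s\<in>V - leaves V r par. \<forall>t\<in>V - leaves V r par. cl s = cl t \<longrightarrow>
        (\<forall>z. z \<in> tpath V par (\<pi> s) (\<sigma> s) \<longrightarrow> z \<in> tpath V par (\<pi> t) (\<sigma> t) \<longrightarrow> s = t)) \<and>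
     (\<forall>x\<in>leaves V r par. \<exists>i<4. \<forall>s\<in>V - leaves V r par. cl s = i \<longrightarrow> x \<notin> tpath V par (\<pi> s) (\<sigma> s)))"

lemma step:
  assumes T: "rooted_tree V r par"
    and br: "\<forall>u\<in>V. children V r par u \<noteq> {} \<longrightarrow> card (children V r par u) \<ge> 2"
    and vV: "v \<in> V" and vL: "v \<notin> leaves V r par"
    and CL: "children V r par v \<subseteq> leaves V r par"
    and IH: "rooted_tree (V - children V r par v) r par \<Longrightarrow>
       (\<forall>u\<in>V - children V r par v. children (V - children V r par v) r par u \<noteq> {} \<longrightarrow>
            card (children (V - children V r par v) r par u) \<ge> 2) \<Longrightarrow>
       inv4 (V - children V r par v) r par"
  shows "inv4 V r par"
proof -
  define C where "C = children V r par v"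
  define V' where "V' = V - C"
  let ?L = "leaves V r par"
  let ?L' = "leaves V' r par"
  have CV: "C \<subseteq> V" unfolding C_def children_def by blast
  have CsubL: "C \<subseteq> ?L" using CL C_def by simp
  have vC: "v \<notin> C" using vL CsubL by blast
  have vV': "v \<in> V'" using vV vC V'_def by blast
  have Cpar: "\<forall>c\<in>C. par c = v \<and> c \<noteq> r" by (auto simp: C_def children_def)
  have sub: "V' \<subseteq> V" unfolding V'_def by blast
  have CinL: "\<forall>z\<in>V - V'. z \<in> ?L" using CsubL V'_def by blast
  have T': "rooted_tree V' r par"
    unfolding rooted_tree_def
  proof (intro conjI ballI)
    show "finite V'" using T unfolding V'_def rooted_tree_def by auto
    show "r \<in> V'" using T Cpar unfolding V'_def rooted_tree_def by auto
    show "par r = r" using T unfolding rooted_tree_def by auto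
  next
    fix x assume x: "x \<in> V'"
    show "par x \<in> V'"
    proof (rule ccontr)
      assume "par x \<notin> V'"
      then have pC: "par x \<in> C" using x T unfolding V'_def rooted_tree_def by auto
      then have pl: "par x \<in> ?L" using CsubL by blast
      have "x \<noteq> r" using pC Cpar T unfolding rooted_tree_def by auto
      then have "x \<in> children V r par (par x)" using x unfolding V'_def children_def by auto
      then show False using pl unfolding leaves_def by auto
    qed
  next
    fix x assume x: "x \<in> V'"
    show "\<exists>k. (par ^^ k) x = r" using x T unfolding V'_def rooted_tree_def by auto
  qed
  have chV': "\<And>u. children V' r par u = (if u = v then {} else children V r par u)"
    unfolding V'_def C_def children_def by auto
  have leafV': "\<And>x. x \<in> ?L' \<longleftrightarrow> x \<in> V' \<and> (x = v \<or> x \<in> ?L)"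
    using chV' vV' sub unfolding leaves_def by auto
  have brV': "\<forall>u\<in>V'. children V' r par u \<noteq> {} \<longrightarrow> card (children V' r par u) \<ge> 2"
    using br chV' sub by auto
  have "inv4 V' r par" using IH T' brV' unfolding V'_def C_def by blast
  then obtain cl' :: "'a \<Rightarrow> nat" and \<pi>' \<sigma>' where
    H1: "\<forall>s\<in>V' - ?L'. cl' s < 4 \<and> \<pi>' s \<in> ?L' \<and> \<sigma>' s \<in> ?L' \<and> is_lca par s (\<pi>' s) (\<sigma>' s)" and
    H2: "\<forall>s\<in>V' - ?L'. \<forall>t\<in>V' - ?L'. cl' s = cl' t \<longrightarrow>
        (\<forall>z. z \<in> tpath V' par (\<pi>' s) (\<sigma>' s) \<longrightarrow> z \<in> tpath V' par (\<pi>' t) (\<sigma>' t) \<longrightarrow> s = t)" and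
    H3: "\<forall>x\<in>?L'. \<exists>i<4. \<forall>s\<in>V' - ?L'. cl' s = i \<longrightarrow> x \<notin> tpath V' par (\<pi>' s) (\<sigma>' s)"
    unfolding inv4_def by blast
  have Cne: "C \<noteq> {}" using vV vL unfolding C_def leaves_def by blast
  have finC: "finite C" using finite_subset[OF CV] T unfolding rooted_tree_def by blast
  have "card C \<ge> 2" using br vV Cne C_def by blast
  then have "\<not> card C \<le> Suc 0" by simp
  then obtain la lb where lab: "la \<in> C" "lb \<in> C" "la \<noteq> lb"
    using card_le_Suc0_iff_eq[OF finC] by blast
  obtain j where j: "j < 4" "\<forall>s\<in>V' - ?L'. cl' s = j \<longrightarrow> v \<notin> tpath V' par (\<pi>' s) (\<sigma>' s)"
    using H3 vV' leafV' by blast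
  define k1 where "k1 = (if j = 0 then 1 else (0::nat))"
  define k2 where "k2 = (if j = 3 then 2 else (3::nat))"
  have kk: "k1 < 4" "k2 < 4" "k1 \<noteq> j" "k2 \<noteq> j" "k1 \<noteq> k2"
    unfolding k1_def k2_def by auto
  define red where "red i = (if i = k1 then la else lb)" for i
  define cl where "cl s = (if s = v then j else cl' s)" for s
  define \<pi> where "\<pi> s = (if s = v then la else if \<pi>' s = v then red (cl' s) else \<pi>' s)" for s
  define \<sigma> where "\<sigma> s = (if s = v then lb else if \<sigma>' s = v then red (cl' s) else \<sigma>' s)" for s
  have redC: "\<And>i. red i \<in> C" using lab unfolding red_def by auto
  have I'I: "\<And>s. s \<in> V - ?L \<Longrightarrow> s \<noteq> v \<Longrightarrow> s \<in> V' - ?L'"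
    using CsubL leafV' V'_def by blast
  have F: "is_lca par s (\<pi> s) (\<sigma> s) \<and> \<pi> s \<in> ?L \<and> \<sigma> s \<in> ?L \<and>
     (\<forall>z\<in>tpath V par (\<pi> s) (\<sigma> s). (z \<in> V' \<longrightarrow> z \<in> tpath V' par (\<pi>' s) (\<sigma>' s)) \<and>
        (z \<notin> V' \<longrightarrow> z = red (cl' s) \<and> v \<in> tpath V' par (\<pi>' s) (\<sigma>' s)))"
    if s: "s \<in> V - ?L" "s \<noteq> v" for s
  proof -
    have s': "s \<in> V' - ?L'" using I'I s by blast
    have x'L: "\<pi>' s \<in> ?L'" and y'L: "\<sigma>' s \<in> ?L'" and lca: "is_lca par s (\<pi>' s) (\<sigma>' s)"
      using H1 s' by auto
    have x'V: "\<pi>' s \<in> V'" and y'V: "\<sigma>' s \<in> V'" using x'L y'L leafV' by auto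
    have notboth: "\<not> (\<pi>' s = v \<and> \<sigma>' s = v)"
    proof
      assume "\<pi>' s = v \<and> \<sigma>' s = v"
      then have l2: "is_lca par s v v" using lca by simp
      then have "anc par s v" unfolding is_lca_def by blast
      moreover have "anc par v s" using l2 anc_refl[of par v] unfolding is_lca_def by blast
      ultimately have "anc par s v" "anc par v s" by blast+
      then show False using anc_antisym[OF T vV] s by blast
    qed
    let ?l = "red (cl' s)"
    have lL: "?l \<in> ?L" and pl: "par ?l = v" and lV': "?l \<notin> V'"
      using redC CsubL Cpar V'_def by auto
    show ?thesis
    proof (cases "\<pi>' s = v")
      case True
      then have ys: "\<sigma>' s \<noteq> v" using notboth by blast
      have e: "\<pi> s = ?l" "\<sigma> s = \<sigma>' s" using True ys s unfolding \<pi>_def \<sigma>_def by auto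
      have R: "is_lca par s ?l (\<sigma>' s) \<and> (\<forall>z\<in>tpath V par ?l (\<sigma>' s). (z \<in> V' \<longrightarrow> z \<in> tpath V' par v (\<sigma>' s)) \<and> (z \<notin> V' \<longrightarrow> z = ?l))"
        using redirect[OF T lL pl _ y'V sub lV' CinL] lca True by simp
      have vin: "v \<in> tpath V' par v (\<sigma>' s)" using endpoint[OF vV'] lca True by simp
      have yL: "\<sigma>' s \<in> ?L" using y'L ys leafV' by blast
      have A: "\<forall>z\<in>tpath V par ?l (\<sigma>' s). (z \<in> V' \<longrightarrow> z \<in> tpath V' par (\<pi>' s) (\<sigma>' s)) \<and>
          (z \<notin> V' \<longrightarrow> z = ?l \<and> v \<in> tpath V' par (\<pi>' s) (\<sigma>' s))"
        unfolding True using R vin by blast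
      have B: "is_lca par s ?l (\<sigma>' s)" using R by blast
      show ?thesis unfolding e using B lL yL A by (intro conjI) assumption+
    next
      case False
      show ?thesis
      proof (cases "\<sigma>' s = v")
        case True
        have e: "\<pi> s = \<pi>' s" "\<sigma> s = ?l" using True False s unfolding \<pi>_def \<sigma>_def by auto
        have lca2: "is_lca par s v (\<pi>' s)" using lca_sym[OF lca] True by simp
        have R: "is_lca par s ?l (\<pi>' s) \<and> (\<forall>z\<in>tpath V par ?l (\<pi>' s). (z \<in> V' \<longrightarrow> z \<in> tpath V' par v (\<pi>' s)) \<and> (z \<notin> V' \<longrightarrow> z = ?l))"
          using redirect[OF T lL pl lca2 x'V sub lV' CinL] by simp
        have vin: "v \<in> tpath V' par v (\<pi>' s)" using endpoint[OF vV' lca2] .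
        have "\<pi>' s \<in> ?L" using x'L False leafV' by blast
        note xL = this
        have t1: "tpath V par (\<pi>' s) ?l = tpath V par ?l (\<pi>' s)" by (rule tpath_sym)
        have t2: "tpath V' par (\<pi>' s) v = tpath V' par v (\<pi>' s)" by (rule tpath_sym)
        have A: "\<forall>z\<in>tpath V par ?l (\<pi>' s). (z \<in> V' \<longrightarrow> z \<in> tpath V' par v (\<pi>' s)) \<and>
            (z \<notin> V' \<longrightarrow> z = ?l \<and> v \<in> tpath V' par v (\<pi>' s))"
          using R vin by blast
        have B: "is_lca par s (\<pi>' s) ?l" using lca_sym[of par s ?l "\<pi>' s"] R by blast
        show ?thesis unfolding e True t1 t2 using B xL lL A by (intro conjI) assumption+
      next
        case False2: False
        have e: "\<pi> s = \<pi>' s" "\<sigma> s = \<sigma>' s" using False2 False s unfolding \<pi>_def \<sigma>_def by auto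
        have xL: "\<pi>' s \<in> ?L" and yL: "\<sigma>' s \<in> ?L" using x'L y'L False False2 leafV' by blast+
        have PE: "tpath V par (\<pi>' s) (\<sigma>' s) = tpath V' par (\<pi>' s) (\<sigma>' s)"
          using keep[OF T x'V y'V sub CinL] .
        have PS: "tpath V' par (\<pi>' s) (\<sigma>' s) \<subseteq> V'" unfolding tpath_def by blast
        have A: "\<forall>z\<in>tpath V' par (\<pi>' s) (\<sigma>' s). (z \<in> V' \<longrightarrow> z \<in> tpath V' par (\<pi>' s) (\<sigma>' s)) \<and>
            (z \<notin> V' \<longrightarrow> z = ?l \<and> v \<in> tpath V' par (\<pi>' s) (\<sigma>' s))"
          using PS by blast
        show ?thesis unfolding e PE using lca xL yL A by (intro conjI) assumption+
      qed
    qed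
  qed
  have laL: "la \<in> ?L" and lbL: "lb \<in> ?L" using lab CsubL by auto
  have lapar: "par la = v" and lbpar: "par lb = v" using lab Cpar by auto
  have laV': "la \<notin> V'" and lbV': "lb \<notin> V'" using lab V'_def by auto
  have lbV: "lb \<in> V" using lab CV by auto
  have Fv: "is_lca par v la lb"
    unfolding is_lca_def
  proof (intro conjI allI impI)
    show "anc par v la" using anc_par[of par la] lapar by simp
    show "anc par v lb" using anc_par[of par lb] lbpar by simp
    fix w assume w: "anc par w la \<and> anc par w lb"
    then have "w = la \<or> anc par w v" using anc_step[of par w la] lapar by simp
    moreover have "w \<noteq> la"
    proof
      assume "w = la"
      then have "lb = la" using anc_leaf[OF T laL lbV] w by blast
      then show False using lab by blast
    qed
    ultimately show "anc par w v" by blast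
  qed
  have pathv: "tpath V par la lb \<subseteq> {la, lb, v}"
  proof
    fix z assume z: "z \<in> tpath V par la lb"
    then have zz: "z \<in> V" "anc par z la \<or> anc par z lb" "anc par v z"
      using tpath_lca[OF Fv, of V] by auto
    have "z = la \<or> z = lb \<or> anc par z v"
      using zz(2) anc_step[of par z la] anc_step[of par z lb] lapar lbpar by auto
    then show "z \<in> {la, lb, v}" using anc_antisym[OF T vV _ zz(3)] by blast
  qed
  have ev: "\<pi> v = la" "\<sigma> v = lb" "cl v = j" unfolding \<pi>_def \<sigma>_def cl_def by auto
  have en: "\<And>s. s \<noteq> v \<Longrightarrow> cl s = cl' s" unfolding cl_def by auto
  have vcase: False if t: "t \<in> V - ?L" "t \<noteq> v" "cl' t = j" and z: "z \<in> tpath V par la lb"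
     "z \<in> tpath V par (\<pi> t) (\<sigma> t)" for t z
  proof -
    have t': "t \<in> V' - ?L'" using I'I t by blast
    have nv: "v \<notin> tpath V' par (\<pi>' t) (\<sigma>' t)" using j(2) t' t(3) by blast
    have Ft: "(z \<in> V' \<longrightarrow> z \<in> tpath V' par (\<pi>' t) (\<sigma>' t)) \<and>
        (z \<notin> V' \<longrightarrow> z = red (cl' t) \<and> v \<in> tpath V' par (\<pi>' t) (\<sigma>' t))"
      using F[OF t(1,2)] z(2) by blast
    have "z \<in> {la, lb, v}" using pathv z(1) by blast
    then show False using Ft nv laV' lbV' by blast
  qed
  have P1: "\<forall>s\<in>V - ?L. cl s < 4 \<and> \<pi> s \<in> ?L \<and> \<sigma> s \<in> ?L \<and> is_lca par s (\<pi> s) (\<sigma> s)"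
  proof
    fix s assume s: "s \<in> V - ?L"
    show "cl s < 4 \<and> \<pi> s \<in> ?L \<and> \<sigma> s \<in> ?L \<and> is_lca par s (\<pi> s) (\<sigma> s)"
    proof (cases "s = v")
      case True then show ?thesis using ev j Fv laL lbL by simp
    next
      case False
      have "cl' s < 4" using H1 I'I[OF s False] by blast
      then show ?thesis using F[OF s False] en[OF False] by simp
    qed
  qed
  have P2: "\<forall>s\<in>V - ?L. \<forall>t\<in>V - ?L. cl s = cl t \<longrightarrow>
        (\<forall>z. z \<in> tpath V par (\<pi> s) (\<sigma> s) \<longrightarrow> z \<in> tpath V par (\<pi> t) (\<sigma> t) \<longrightarrow> s = t)"
  proof (intro ballI allI impI)
    fix s t z assume s: "s \<in> V - ?L" and t: "t \<in> V - ?L" and c: "cl s = cl t"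
      and zs: "z \<in> tpath V par (\<pi> s) (\<sigma> s)" and zt: "z \<in> tpath V par (\<pi> t) (\<sigma> t)"
    show "s = t"
    proof (cases "s = v")
      case sv: True
      show ?thesis
      proof (rule ccontr)
        assume "s \<noteq> t"
        then have tv: "t \<noteq> v" using sv by simp
        have "cl' t = j" using c sv ev en[OF tv] by simp
        then show False using vcase[OF t tv _ _ zt] zs sv ev by simp
      qed
    next
      case sv: False
      show ?thesis
      proof (cases "t = v")
        case tv: True
        have "cl' s = j" using c tv ev en[OF sv] by simp
        then show ?thesis using vcase[OF s sv _ _ zs] zt tv ev by simp
      next
        case tv: False
        have c': "cl' s = cl' t" using c en[OF sv] en[OF tv] by simp
        have s': "s \<in> V' - ?L'" and t': "t \<in> V' - ?L'" using I'I s t sv tv by auto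
        have Fs: "(z \<in> V' \<longrightarrow> z \<in> tpath V' par (\<pi>' s) (\<sigma>' s)) \<and>
          (z \<notin> V' \<longrightarrow> z = red (cl' s) \<and> v \<in> tpath V' par (\<pi>' s) (\<sigma>' s))"
          using F[OF s sv] zs by blast
        have Ft: "(z \<in> V' \<longrightarrow> z \<in> tpath V' par (\<pi>' t) (\<sigma>' t)) \<and>
          (z \<notin> V' \<longrightarrow> z = red (cl' t) \<and> v \<in> tpath V' par (\<pi>' t) (\<sigma>' t))"
          using F[OF t tv] zt by blast
        have H2st: "\<And>y. y \<in> tpath V' par (\<pi>' s) (\<sigma>' s) \<Longrightarrow> y \<in> tpath V' par (\<pi>' t) (\<sigma>' t) \<Longrightarrow> s = t"
          using H2 s' t' c' by blast
        show ?thesis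
        proof (cases "z \<in> V'")
          case True then show ?thesis using Fs Ft H2st by blast
        next
          case False then show ?thesis using Fs Ft H2st by blast
        qed
      qed
    qed
  qed
  have P3: "\<forall>x\<in>?L. \<exists>i<4. \<forall>s\<in>V - ?L. cl s = i \<longrightarrow> x \<notin> tpath V par (\<pi> s) (\<sigma> s)"
  proof
    fix x assume x: "x \<in> ?L"
    show "\<exists>i<4. \<forall>s\<in>V - ?L. cl s = i \<longrightarrow> x \<notin> tpath V par (\<pi> s) (\<sigma> s)"
    proof (cases "x \<in> V'")
      case True
      have xv: "x \<noteq> v" using x vL by blast
      have "x \<in> ?L'" using True x leafV' by blast
      then obtain i where i: "i < 4" "\<forall>s\<in>V' - ?L'. cl' s = i \<longrightarrow> x \<notin> tpath V' par (\<pi>' s) (\<sigma>' s)"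
        using H3 by blast
      have "\<forall>s\<in>V - ?L. cl s = i \<longrightarrow> x \<notin> tpath V par (\<pi> s) (\<sigma> s)"
      proof (intro ballI impI)
        fix s assume s: "s \<in> V - ?L" and cs: "cl s = i"
        show "x \<notin> tpath V par (\<pi> s) (\<sigma> s)"
        proof (cases "s = v")
          case True
          have "x \<notin> {la, lb, v}" using xv laV' lbV' \<open>x \<in> V'\<close> by blast
          then show ?thesis using ev pathv True by auto
        next
          case False
          have s': "s \<in> V' - ?L'" using I'I[OF s False] .
          have "cl' s = i" using cs en[OF False] by simp
          then have "x \<notin> tpath V' par (\<pi>' s) (\<sigma>' s)" using i(2) s' by blast
          then show ?thesis using F[OF s False] \<open>x \<in> V'\<close> by blast
        qed
      qed
      then show ?thesis using i(1) by blast
    next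
      case False
      define i where "i = (if x = la then k2 else k1)"
      have "\<forall>s\<in>V - ?L. cl s = i \<longrightarrow> x \<notin> tpath V par (\<pi> s) (\<sigma> s)"
      proof (intro ballI impI)
        fix s assume s: "s \<in> V - ?L" and cs: "cl s = i"
        show "x \<notin> tpath V par (\<pi> s) (\<sigma> s)"
        proof (cases "s = v")
          case True
          then have "i = j" using cs ev by simp
          moreover have "i \<noteq> j" using kk unfolding i_def by auto
          ultimately show ?thesis by blast
        next
          case sv: False
          have ci: "cl' s = i" using cs en[OF sv] by simp
          show ?thesis
          proof
            assume "x \<in> tpath V par (\<pi> s) (\<sigma> s)"
            then have "x = red i" using F[OF s sv] False ci by blast
            moreover have "red i \<noteq> x" using kk lab unfolding i_def red_def by auto
            ultimately show False by blast
          qed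
        qed
      qed
      moreover have "i < 4" using kk unfolding i_def by auto
      ultimately show ?thesis by blast
    qed
  qed
  show ?thesis unfolding inv4_def
    by (rule exI[of _ cl], rule exI[of _ \<pi>], rule exI[of _ \<sigma>], intro conjI P1 P2 P3)
qed


lemma main_inv:
  assumes "rooted_tree V r par"
    and "\<forall>v\<in>V. children V r par v \<noteq> {} \<longrightarrow> card (children V r par v) \<ge> 2"
  shows "inv4 V r par"
  using assms
proof (induction "card V" arbitrary: V rule: less_induct)
  case less
  note T = less.prems(1) and br = less.prems(2)
  show ?case
  proof (cases "V - leaves V r par = {}")
    case True
    show ?thesis unfolding inv4_def True by (auto intro: exI[where x="0::nat"])
  next
    case False
    define dep where "dep x = (LEAST k. (par ^^ k) x = r)" for x
    let ?I = "V - leaves V r par"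
    have finI: "finite ?I" using T unfolding rooted_tree_def by blast
    define M where "M = Max (dep ` ?I)"
    have "M \<in> dep ` ?I" unfolding M_def using finI False by (intro Max_in) auto
    then obtain v where vI: "v \<in> ?I" and dv: "dep v = M" by blast
    have maxd: "\<forall>x\<in>?I. dep x \<le> dep v" unfolding dv M_def using finI by auto
    have CL: "children V r par v \<subseteq> leaves V r par"
    proof
      fix c assume c: "c \<in> children V r par v"
      then have cV: "c \<in> V" "c \<noteq> r" "par c = v" unfolding children_def by auto
      show "c \<in> leaves V r par"
      proof (rule ccontr)
        assume "c \<notin> leaves V r par"
        then have le: "dep c \<le> dep v" using maxd cV by blast
        obtain n where n: "(par ^^ n) c = r" using T cV unfolding rooted_tree_def by blast
        have dc: "(par ^^ dep c) c = r" unfolding dep_def using n by (rule LeastI)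
        have "dep c \<noteq> 0"
        proof
          assume "dep c = 0"
          then have "c = r" using dc by simp
          then show False using cV by blast
        qed
        then obtain d where d: "dep c = Suc d" by (cases "dep c") auto
        have e: "(par ^^ Suc d) c = (par ^^ d) (par c)" by (simp only: funpow_Suc_right comp_apply)
        have "(par ^^ d) (par c) = r" using trans[OF e[symmetric] dc[unfolded d]] .
        then have "(par ^^ d) v = r" using cV(3) by simp
        then have "dep v \<le> d" unfolding dep_def by (rule Least_le)
        then show False using le d by simp
      qed
    qed
    have vV: "v \<in> V" and vL: "v \<notin> leaves V r par" using vI by auto
    have Cne: "children V r par v \<noteq> {}" using vV vL unfolding leaves_def by blast
    have CV: "children V r par v \<subseteq> V" unfolding children_def by blast
    have finV: "finite V" using T unfolding rooted_tree_def by blast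
    have "V - children V r par v \<subset> V" using Cne CV by blast
    then have lt: "card (V - children V r par v) < card V" using finV by (rule psubset_card_mono[rotated])
    show ?thesis by (rule step[OF T br vV vL CL less.hyps[OF lt]])
  qed
qed

theorem corollary3p10:
  fixes V :: "'a set" and r :: 'a and par :: "'a \<Rightarrow> 'a"
  assumes "rooted_tree V r par"
    and "\<forall>v\<in>V. children V r par v \<noteq> {} \<longrightarrow> card (children V r par v) \<ge> 2"
  shows "\<exists>A B :: nat \<Rightarrow> 'a set.
           (\<forall>i<4. bicolouring V r par (A i) (B i)) \<and>
           family_identifies_tree V r par 4 A B"
proof -
  note T = assms(1)
  let ?L = "leaves V r par"
  let ?I = "V - leaves V r par"
  obtain cl :: "'a \<Rightarrow> nat" and \<pi> \<sigma> where
    H1: "\<forall>s\<in>?I. cl s < 4 \<and> \<pi> s \<in> ?L \<and> \<sigma> s \<in> ?L \<and> is_lca par s (\<pi> s) (\<sigma> s)" and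
    H2: "\<forall>s\<in>?I. \<forall>t\<in>?I. cl s = cl t \<longrightarrow>
        (\<forall>z. z \<in> tpath V par (\<pi> s) (\<sigma> s) \<longrightarrow> z \<in> tpath V par (\<pi> t) (\<sigma> t) \<longrightarrow> s = t)"
    using main_inv[OF assms] unfolding inv4_def by blast
  define P where "P i = {s \<in> ?I. cl s = i}" for i
  define A where "A i = \<pi> ` P i" for i
  define B where "B i = \<sigma> ` P i" for i
  have LV: "?L \<subseteq> V" unfolding leaves_def by blast
  have lcaI: "is_lca par s (\<pi> s) (\<sigma> s)" if "s \<in> ?I" for s using H1 that by blast
  have pV: "\<pi> s \<in> V" if "s \<in> ?I" for s using H1 that LV by blast
  have sV: "\<sigma> s \<in> V" if "s \<in> ?I" for s using H1 that LV by blast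
  have pin: "\<pi> s \<in> tpath V par (\<pi> s) (\<sigma> s)" if "s \<in> ?I" for s
    using endpoint[OF pV[OF that] lcaI[OF that]] .
  have sin: "\<sigma> s \<in> tpath V par (\<pi> s) (\<sigma> s)" if "s \<in> ?I" for s
  proof -
    have "\<sigma> s \<in> tpath V par (\<sigma> s) (\<pi> s)" using endpoint[OF sV[OF that] lca_sym[OF lcaI[OF that]]] .
    then show ?thesis using tpath_sym[of V par "\<sigma> s" "\<pi> s"] by simp
  qed
  have uq: "s = t" if "s \<in> P i" "t \<in> P i" "z \<in> tpath V par (\<pi> s) (\<sigma> s)" "z \<in> tpath V par (\<pi> t) (\<sigma> t)" for s t z i
    using H2 that unfolding P_def by blast
  have injp: "inj_on \<pi> (P i)" for i
  proof (rule inj_onI)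
    fix s t assume st: "s \<in> P i" "t \<in> P i" "\<pi> s = \<pi> t"
    have "\<pi> s \<in> tpath V par (\<pi> t) (\<sigma> t)" using pin st unfolding P_def by simp
    then show "s = t" using uq[OF st(1,2)] pin st(1) unfolding P_def by blast
  qed
  have injs: "inj_on \<sigma> (P i)" for i
  proof (rule inj_onI)
    fix s t assume st: "s \<in> P i" "t \<in> P i" "\<sigma> s = \<sigma> t"
    have "\<sigma> s \<in> tpath V par (\<pi> t) (\<sigma> t)" using sin st unfolding P_def by simp
    then show "s = t" using uq[OF st(1,2)] sin st(1) unfolding P_def by blast
  qed
  have PI: "P i \<subseteq> ?I" for i unfolding P_def by blast
  have bic: "bicolouring V r par (A i) (B i)" for i
    unfolding bicolouring_def
  proof (intro conjI)
    show "A i \<subseteq> ?L" using H1 PI unfolding A_def by blast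
    show "B i \<subseteq> ?L" using H1 PI unfolding B_def by blast
    show "A i \<inter> B i = {}"
    proof (rule ccontr)
      assume "A i \<inter> B i \<noteq> {}"
      then obtain s t where st: "s \<in> P i" "t \<in> P i" "\<pi> s = \<sigma> t" unfolding A_def B_def by blast
      have sI: "s \<in> ?I" using st PI by blast
      have tI: "t \<in> ?I" using st PI by blast
      have "\<pi> s \<in> tpath V par (\<pi> t) (\<sigma> t)" using sin[OF tI] st(3) by simp
      then have "s = t" using uq[OF st(1,2)] pin sI by blast
      then have eq: "\<pi> s = \<sigma> s" using st by simp
      have "is_lca par s (\<pi> s) (\<sigma> s)" using H1 sI by blast
      then have l: "is_lca par s (\<pi> s) (\<pi> s)" using eq by simp
      have a1: "anc par s (\<pi> s)" using l unfolding is_lca_def by blast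
      have a2: "anc par (\<pi> s) s" using l anc_refl[of par "\<pi> s"] unfolding is_lca_def by blast
      have pV: "\<pi> s \<in> V" using H1 sI LV by blast
      have "s = \<pi> s" using anc_antisym[OF T pV a1 a2] .
      moreover have "\<pi> s \<in> ?L" using H1 sI by blast
      ultimately show False using sI by simp
    qed
    show "card (A i) = card (B i)"
      unfolding A_def B_def using card_image[OF injp] card_image[OF injs] by simp
  qed
  have fam: "family_identifies_tree V r par 4 A B"
    unfolding family_identifies_tree_def family_identifies_def
  proof (intro exI[of _ P] conjI allI impI)
    show "(\<Union>i<4. P i) = ?I" using H1 unfolding P_def by auto
  next
    fix i j :: nat assume "i < 4" "j < 4" "i \<noteq> j"
    then show "P i \<inter> P j = {}" unfolding P_def by auto
  next
    fix i :: nat assume "i < 4"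
    show "bicol_identifies V r par (A i) (B i) (P i)"
      unfolding bicol_identifies_def
    proof (rule exI[of _ \<pi>], rule exI[of _ \<sigma>], intro conjI)
      show "pair_identifies V r par \<pi> \<sigma> (P i)"
      proof -
        have a4: "\<pi> ` P i \<subseteq> ?L" using H1 PI[of i] by blast
        have a5: "\<sigma> ` P i \<subseteq> ?L" using H1 PI[of i] by blast
        have a6: "\<forall>s\<in>P i. is_lca par s (\<pi> s) (\<sigma> s)" using H1 PI[of i] by blast
        show ?thesis unfolding pair_identifies_def by (intro conjI PI injp injs a4 a5 a6)
      qed
      show "unique_request V par \<pi> \<sigma> (P i)"
        unfolding unique_request_def using uq by blast
      show "\<pi> ` P i = A i" by (simp add: A_def)
      show "\<sigma> ` P i = B i" by (simp add: B_def)
    qed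
  qed
  show ?thesis by (rule exI[of _ A], rule exI[of _ B], intro conjI allI impI bic fam)
qed

end
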